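(* Fix an input $x$ with $n=n(x)\ge2$ tokens and a mask $m\in\{0,1\}^{|\mathrm H|}$ with pruning ratio $\rho$, i.e. $\sum_{h=1}^{|\mathrm H|}(1-m_h)=|\mathrm H|\rho$. For each head $h$ and query token $t\in\{1,\dots,n\}$ let $\boldsymbol\alpha^{(h)}_t,\boldsymbol\alpha'^{(h)}_t\in\Delta^{n-1}$ be the attention distributions of the models trained on two neighboring datasets $\mathcal S,\mathcal S'$, and let $V_h\in\mathbb R^{n\times d_v}$ be a common value matrix with $\max_h\|V_h\|_{\infty\to2}\le M$. Set $\Delta_h(t)=(\boldsymbol\alpha^{(h)}_t-\boldsymbol\alpha'^{(h)}_t)^\top V_h$ and $$\|\Delta(x)\|_2:=\frac1n\sum_{t=1}^n\sum_{h=1}^{|\mathrm H|}(1-m_h)\|\Delta_h(t)\|_2.$$ Then $$\|\Delta(x)\|_2\;\le\;M\sqrt{8\log n}\sum_{h=1}^{|\mathrm H|}(1-m_h)\sqrt{\overline{\mathrm{AD}}_h(x)}\;\le\;\sqrt8\,M\sqrt{|\mathrm H|\rho\log n}\;\sqrt{\sum_{h=1}^{|\mathrm H|}(1-m_h)\,\overline{\mathrm{AD}}_h(x)}.$$ Moreover, if all inputs have the same length $n$, then for any distribution over $x$, $$\mathbb E\bigl[\|\Delta(x)\|_2\bigr]\le\sqrt8\,M\sqrt{|\mathrm H|\rho\log n}\;\sqrt{\sum_{h=1}^{|\mathrm H|}(1-m_h)\,\mathbb E\bigl[\overline{\mathrm{AD}}_h(x)\bigr]}.$$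
   Context: $\Delta^{n-1}$ is the probability simplex; $H(\mathbf p)=-\sum_jp_j\log p_j$. $\|V\|_{\infty\to2}:=\max_j\|V(j,:)\|_2$ (maximum row Euclidean norm). Neighboring datasets differ in exactly one example. Token-averaged, length-normalized attention deficits: $\mathrm{AD}_h(x)=\frac{1}{n\log n}\sum_{t=1}^n\bigl(\log n-H(\boldsymbol\alpha^{(h)}_t)\bigr)\in[0,1]$, $\mathrm{AD}'_h(x)$ defined likewise with $\boldsymbol\alpha'^{(h)}_t$, and $\overline{\mathrm{AD}}_h(x)=\tfrac12(\mathrm{AD}_h(x)+\mathrm{AD}'_h(x))$. Equivalently $\mathrm{AD}_h=1-\mathrm{AE}_h$ with $\mathrm{AE}_h(x)=\frac{1}{n\log n}\sum_tH(\boldsymbol\alpha^{(h)}_t)$. *)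

theory Defs
  imports "HOL-Probability.Probability"
begin

text \<open>Conventions: heads are indexed by h < K (K = |H|), tokens/positions by
  t, j < n, value coordinates by k < d (d = d_v).  A per-head attention family is
  a function  a :: nat => nat => real  with  a t j = alpha_t(j).\<close>

definition in_simplex :: "nat \<Rightarrow> (nat \<Rightarrow> real) \<Rightarrow> bool" where
  "in_simplex n p \<longleftrightarrow> (\<forall>j<n. 0 \<le> p j) \<and> (\<Sum>j<n. p j) = 1"

definition entropy :: "nat \<Rightarrow> (nat \<Rightarrow> real) \<Rightarrow> real" where
  "entropy n p = - (\<Sum>j<n. if p j = 0 then 0 else p j * ln (p j))"

definition AD :: "nat \<Rightarrow> (nat \<Rightarrow> nat \<Rightarrow> real) \<Rightarrow> real" where
  "AD n a = (1 / (real n * ln (real n))) * (\<Sum>t<n. ln (real n) - entropy n (a t))"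

definition ADbar :: "nat \<Rightarrow> (nat \<Rightarrow> nat \<Rightarrow> real) \<Rightarrow> (nat \<Rightarrow> nat \<Rightarrow> real) \<Rightarrow> real" where
  "ADbar n a a' = (AD n a + AD n a') / 2"

definition l2norm :: "nat \<Rightarrow> (nat \<Rightarrow> real) \<Rightarrow> real" where
  "l2norm d v = sqrt (\<Sum>k<d. (v k)\<^sup>2)"

definition inf2_norm :: "nat \<Rightarrow> nat \<Rightarrow> (nat \<Rightarrow> nat \<Rightarrow> real) \<Rightarrow> real" where
  "inf2_norm n d W = Max ((\<lambda>j. l2norm d (W j)) ` {..<n})"

definition Delta_vec :: "nat \<Rightarrow> (nat \<Rightarrow> nat \<Rightarrow> real) \<Rightarrow> (nat \<Rightarrow> nat \<Rightarrow> real)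
    \<Rightarrow> (nat \<Rightarrow> nat \<Rightarrow> real) \<Rightarrow> nat \<Rightarrow> nat \<Rightarrow> real" where
  "Delta_vec n a a' W t k = (\<Sum>j<n. (a t j - a' t j) * W j k)"

definition Delta_norm :: "nat \<Rightarrow> nat \<Rightarrow> nat \<Rightarrow> (nat \<Rightarrow> real)
    \<Rightarrow> (nat \<Rightarrow> nat \<Rightarrow> nat \<Rightarrow> real) \<Rightarrow> (nat \<Rightarrow> nat \<Rightarrow> nat \<Rightarrow> real)
    \<Rightarrow> (nat \<Rightarrow> nat \<Rightarrow> nat \<Rightarrow> real) \<Rightarrow> real" where
  "Delta_norm n K d m \<alpha> \<alpha>' V =
     (1 / real n) * (\<Sum>t<n. \<Sum>h<K. (1 - m h) * l2norm d (Delta_vec n (\<alpha> h) (\<alpha>' h) (V h) t))"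

definition setting :: "nat \<Rightarrow> nat \<Rightarrow> nat \<Rightarrow> (nat \<Rightarrow> real) \<Rightarrow> real \<Rightarrow> real
    \<Rightarrow> (nat \<Rightarrow> nat \<Rightarrow> nat \<Rightarrow> real) \<Rightarrow> (nat \<Rightarrow> nat \<Rightarrow> nat \<Rightarrow> real)
    \<Rightarrow> (nat \<Rightarrow> nat \<Rightarrow> nat \<Rightarrow> real) \<Rightarrow> bool" where
  "setting n K d m \<rho> M \<alpha> \<alpha>' V \<longleftrightarrow>
     2 \<le> n \<and>
     (\<forall>h<K. m h \<in> {0, 1}) \<and>
     (\<Sum>h<K. 1 - m h) = real K * \<rho> \<and>
     (\<forall>h<K. \<forall>t<n. in_simplex n (\<alpha> h t) \<and> in_simplex n (\<alpha>' h t)) \<and>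
     (\<forall>h<K. inf2_norm n d (V h) \<le> M)"

end

theory Submission
  imports Defs
begin

definition g1 :: "real \<Rightarrow> real" where "g1 x = 4*x*ln x + 4*ln x - 8*x + 8"
definition g0 :: "real \<Rightarrow> real" where "g0 x = 2*(x+2)*(x*ln x - x + 1) - 3*(x-1)^2"

lemma ln_aux: "0 < (x::real) \<Longrightarrow> 0 \<le> ln x + 1/x - 1"
proof -
  assume x: "0 < x"
  have "ln (1/x) \<le> 1/x - 1" using ln_le_minus_one[of "1/x"] x by simp
  moreover have "ln (1/x) = - ln x" using x by (simp add: ln_div)
  ultimately show ?thesis by simp
qed

lemma g1_deriv: "0 < x \<Longrightarrow> DERIV g1 x :> 4*(ln x + 1/x - 1)"
  unfolding g1_def
  by (auto intro!: derivative_eq_intros simp: field_simps)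

lemma g0_deriv: "0 < x \<Longrightarrow> DERIV g0 x :> g1 x"
  unfolding g0_def g1_def
  by (auto intro!: derivative_eq_intros simp: field_simps power2_eq_square)

lemma g1_mono: "0 < a \<Longrightarrow> a \<le> b \<Longrightarrow> g1 a \<le> g1 b"
  apply (rule DERIV_nonneg_imp_nondecreasing, assumption)
  using g1_deriv ln_aux by (metis dual_order.strict_trans1 mult_nonneg_nonneg zero_le_numeral)

lemma g0_nonneg: "0 \<le> x \<Longrightarrow> 0 \<le> g0 x"
proof -
  assume x: "0 \<le> x"
  have g1_1: "g1 1 = 0" by (simp add: g1_def)
  have g0_1: "g0 1 = 0" by (simp add: g0_def)
  show ?thesis
  proof (cases "x = 0")
    case True then show ?thesis by (simp add: g0_def)
  next
    case False
    then have xp: "0 < x" using x by simp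
    show ?thesis
    proof (cases "1 \<le> x")
      case True
      have "g0 1 \<le> g0 x"
        apply (rule DERIV_nonneg_imp_nondecreasing[OF True])
        using g0_deriv g1_mono[of 1] g1_1 by (metis less_numeral_extra(1) order_less_le_trans)
      then show ?thesis using g0_1 by simp
    next
      case False
      have "g0 1 \<le> g0 x"
        apply (rule DERIV_nonpos_imp_nonincreasing[of x 1])
        using False apply simp
        using g0_deriv g1_mono[of _ 1] g1_1 xp by (metis order_less_le_trans)
      then show ?thesis using g0_1 by simp
    qed
  qed
qed

lemma pinsker_unif:
  assumes n: "1 \<le> n" and p: "in_simplex n p"
  shows "(\<Sum>j<n. \<bar>p j - 1/real n\<bar>)^2 \<le> 2*(ln (real n) - entropy n p)"
proof -
  define q where "q = 1 / real n"
  have qp: "0 < q" using n by (simp add: q_def)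
  have p0: "\<And>j. j < n \<Longrightarrow> 0 \<le> p j" and p1: "(\<Sum>j<n. p j) = 1"
    using p by (auto simp: in_simplex_def)
  define w where "w j = p j + 2*q" for j
  have wp: "\<And>j. j < n \<Longrightarrow> 0 < w j" using p0 qp by (simp add: w_def add_nonneg_pos)
  have sumq: "(\<Sum>j<n. q) = 1" using n by (simp add: q_def)
  have sumw: "(\<Sum>j<n. w j) = 3" using p1 sumq by (simp add: w_def sum.distrib sum_distrib_left[symmetric])
  define T where "T j = p j * ln (real n) + (if p j = 0 then 0 else p j * ln (p j))" for j
  have D: "ln (real n) - entropy n p = (\<Sum>j<n. T j)"
    unfolding T_def entropy_def using p1 by (simp add: sum.distrib sum_distrib_right[symmetric])
  have Tj: "3/2 * ((p j - q)^2 / w j) + (p j - q) \<le> T j" if j: "j < n" for j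
  proof -
    define x where "x = real n * p j"
    have x0: "0 \<le> x" using p0[OF j] by (simp add: x_def)
    have pj: "p j = q * x" using n by (simp add: x_def q_def)
    have g: "0 \<le> g0 x" using g0_nonneg[OF x0] .
    have e1: "T j = q * (x * ln x - x + 1) + (p j - q)"
    proof (cases "p j = 0")
      case True then show ?thesis by (simp add: T_def x_def)
    next
      case False
      then have "0 < p j" using p0[OF j] by simp
      then have "ln x = ln (real n) + ln (p j)" using n by (simp add: x_def ln_mult)
      then show ?thesis using False n by (simp add: T_def pj q_def field_simps)
    qed
    have e2: "(p j - q)^2 / w j = q * (x-1)^2 / (x+2)"
    proof -
      have a: "w j = q * (x+2)" by (simp add: w_def pj algebra_simps)
      have b: "(p j - q)^2 = q * (q * (x-1)^2)" by (simp add: pj power2_eq_square algebra_simps)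
      show ?thesis unfolding a b using qp x0 by simp
    qed
    have "3 * (x-1)^2 / (2*(x+2)) \<le> x * ln x - x + 1"
      using g x0 by (simp add: g0_def field_simps)
    then have "q * (3 * (x-1)^2 / (2*(x+2))) \<le> q * (x * ln x - x + 1)"
      using qp by (intro mult_left_mono) auto
    then show ?thesis using e1 e2 by (simp add: field_simps)
  qed
  have "(\<Sum>j<n. \<bar>p j - q\<bar>)^2 = (\<Sum>j<n. sqrt (w j) * (\<bar>p j - q\<bar> / sqrt (w j)))^2"
    using wp by (intro arg_cong[where f="\<lambda>z. z^2"] sum.cong) (auto, metis less_irrefl)
  also have "\<dots> \<le> (\<Sum>j<n. (sqrt (w j))^2) * (\<Sum>j<n. (\<bar>p j - q\<bar> / sqrt (w j))^2)"
    by (rule Cauchy_Schwarz_ineq_sum)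
  also have "\<dots> = 3 * (\<Sum>j<n. (p j - q)^2 / w j)"
    using wp sumw by (simp add: power_divide less_imp_le)
  also have "\<dots> \<le> 2 * (\<Sum>j<n. T j)"
  proof -
    have "(\<Sum>j<n. 3/2 * ((p j - q)^2 / w j) + (p j - q)) \<le> (\<Sum>j<n. T j)"
      using Tj by (intro sum_mono) auto
    moreover have "(\<Sum>j<n. 3/2 * ((p j - q)^2 / w j) + (p j - q)) = 3/2 * (\<Sum>j<n. (p j - q)^2 / w j)"
      using p1 sumq by (simp add: sum.distrib sum_subtractf sum_distrib_left)
    ultimately show ?thesis by simp
  qed
  finally show ?thesis using D by (simp add: q_def)
qed

lemma L2_set_sum_le:
  assumes "finite J"
  shows "L2_set (\<lambda>k. \<Sum>j\<in>J. f j k) A \<le> (\<Sum>j\<in>J. L2_set (f j) A)"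
  using assms
proof (induction J rule: finite_induct)
  case empty then show ?case by (simp add: L2_set_def)
next
  case (insert x F)
  have "L2_set (\<lambda>k. \<Sum>j\<in>insert x F. f j k) A = L2_set (\<lambda>k. f x k + (\<Sum>j\<in>F. f j k)) A"
    using insert by simp
  also have "\<dots> \<le> L2_set (f x) A + L2_set (\<lambda>k. \<Sum>j\<in>F. f j k) A"
    by (rule L2_set_triangle_ineq)
  also have "\<dots> \<le> L2_set (f x) A + (\<Sum>j\<in>F. L2_set (f j) A)" using insert by simp
  finally show ?case using insert by simp
qed

lemma L2_set_scale: "L2_set (\<lambda>k. c * g k) A = \<bar>c\<bar> * L2_set g A"
  unfolding L2_set_def
  by (simp add: power_mult_distrib real_sqrt_mult flip: sum_distrib_left)

lemma Delta_vec_bound: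
  assumes "\<And>j. j < n \<Longrightarrow> l2norm d (W j) \<le> M"
  shows "l2norm d (Delta_vec n a a' W t) \<le> M * (\<Sum>j<n. \<bar>a t j - a' t j\<bar>)"
proof -
  have "l2norm d (Delta_vec n a a' W t) = L2_set (\<lambda>k. \<Sum>j<n. (a t j - a' t j) * W j k) {..<d}"
    by (simp add: l2norm_def L2_set_def Delta_vec_def)
  also have "\<dots> \<le> (\<Sum>j<n. L2_set (\<lambda>k. (a t j - a' t j) * W j k) {..<d})"
    by (rule L2_set_sum_le) simp
  also have "\<dots> = (\<Sum>j<n. \<bar>a t j - a' t j\<bar> * l2norm d (W j))"
    by (simp add: L2_set_scale l2norm_def L2_set_def)
  also have "\<dots> \<le> (\<Sum>j<n. \<bar>a t j - a' t j\<bar> * M)"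
    using assms by (intro sum_mono mult_left_mono) auto
  finally show ?thesis by (simp add: sum_distrib_left mult.commute)
qed

lemma avg_le_sqrt:
  fixes L :: "nat \<Rightarrow> real"
  assumes "1 \<le> n"
  shows "(\<Sum>t<n. L t) / real n \<le> sqrt ((\<Sum>t<n. (L t)^2) / real n)"
proof -
  have cs: "(\<Sum>t<n. 1 * L t)^2 \<le> (\<Sum>t<n. 1^2) * (\<Sum>t<n. (L t)^2)"
    by (rule Cauchy_Schwarz_ineq_sum)
  have np: "0 < real n" using assms by simp
  have "((\<Sum>t<n. L t) / real n)^2 = (\<Sum>t<n. L t)^2 / (real n)^2" by (simp add: power_divide)
  also have "\<dots> \<le> (real n * (\<Sum>t<n. (L t)^2)) / (real n)^2"
    using cs np by (intro divide_right_mono) auto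
  also have "\<dots> = (\<Sum>t<n. (L t)^2) / real n" using np by (simp add: power2_eq_square)
  finally show ?thesis by (rule real_le_rsqrt)
qed

lemma sqrt_add_le: "0 \<le> a \<Longrightarrow> 0 \<le> b \<Longrightarrow> sqrt a + sqrt b \<le> sqrt (2*(a+b))"
proof -
  assume a: "0 \<le> a" and b: "0 \<le> b"
  have "(sqrt a + sqrt b)^2 \<le> 2*(a+b)"
  proof -
    have "0 \<le> (sqrt a - sqrt b)^2" by simp
    then show ?thesis using a b by (simp add: power2_eq_square algebra_simps)
  qed
  then show ?thesis by (rule real_le_rsqrt)
qed

lemma head_avg_bound:
  assumes n: "2 \<le> n" and sp: "\<And>t. t < n \<Longrightarrow> in_simplex n (a t)"
  shows "(\<Sum>t<n. (\<Sum>j<n. \<bar>a t j - 1/real n\<bar>)) / real n \<le> sqrt (2 * ln (real n) * AD n a)"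
    and "0 \<le> AD n a"
proof -
  define L where "L t = (\<Sum>j<n. \<bar>a t j - 1/real n\<bar>)" for t
  define D where "D t = ln (real n) - entropy n (a t)" for t
  have LD: "(L t)^2 \<le> 2 * D t" if "t < n" for t
    using pinsker_unif[of n "a t"] n sp[OF that] by (simp add: L_def D_def)
  have lnp: "0 < ln (real n)" using n by simp
  have np: "0 < real n" using n by simp
  have AD: "AD n a = (\<Sum>t<n. D t) / (real n * ln (real n))"
    by (simp add: AD_def D_def)
  have Dsum: "2 * ln (real n) * AD n a = (\<Sum>t<n. 2 * D t) / real n"
    using lnp np by (simp add: AD sum_distrib_left field_simps)
  have "0 \<le> (\<Sum>t<n. D t)"
  proof (intro sum_nonneg)
    fix t assume "t \<in> {..<n}"
    then have "(L t)^2 \<le> 2 * D t" using LD by simp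
    moreover have "0 \<le> (L t)^2" by simp
    ultimately show "0 \<le> D t" by linarith
  qed
  then show "0 \<le> AD n a" using AD lnp np by simp
  have "(\<Sum>t<n. L t) / real n \<le> sqrt ((\<Sum>t<n. (L t)^2) / real n)"
    using n by (intro avg_le_sqrt) simp
  also have "\<dots> \<le> sqrt ((\<Sum>t<n. 2 * D t) / real n)"
    using LD np by (intro real_sqrt_le_mono divide_right_mono sum_mono) auto
  finally show "(\<Sum>t<n. (\<Sum>j<n. \<bar>a t j - 1/real n\<bar>)) / real n \<le> sqrt (2 * ln (real n) * AD n a)"
    using Dsum by (simp add: L_def)
qed

lemma head_bound:
  assumes n: "2 \<le> n"
    and sp: "\<And>t. t < n \<Longrightarrow> in_simplex n (a t) \<and> in_simplex n (a' t)"
    and W: "inf2_norm n d W \<le> M"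
  shows "(\<Sum>t<n. l2norm d (Delta_vec n a a' W t)) / real n
          \<le> M * sqrt (8 * ln (real n)) * sqrt (ADbar n a a')"
    and "0 \<le> M" and "0 \<le> ADbar n a a'"
proof -
  have np: "0 < real n" using n by simp
  have Wj: "l2norm d (W j) \<le> M" if "j < n" for j
  proof -
    have "l2norm d (W j) \<le> inf2_norm n d W"
      unfolding inf2_norm_def using that by (intro Max_ge) auto
    then show ?thesis using W by simp
  qed
  have "0 \<le> l2norm d (W 0)" by (simp add: l2norm_def sum_nonneg)
  then show M0: "0 \<le> M" using Wj[of 0] n by simp
  define L where "L t = (\<Sum>j<n. \<bar>a t j - 1/real n\<bar>)" for t
  define L' where "L' t = (\<Sum>j<n. \<bar>a' t j - 1/real n\<bar>)" for t
  have h1: "(\<Sum>t<n. L t) / real n \<le> sqrt (2 * ln (real n) * AD n a)" "0 \<le> AD n a"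
    using head_avg_bound[of n a] n sp unfolding L_def by auto
  have h2: "(\<Sum>t<n. L' t) / real n \<le> sqrt (2 * ln (real n) * AD n a')" "0 \<le> AD n a'"
    using head_avg_bound[of n a'] n sp unfolding L'_def by auto
  show "0 \<le> ADbar n a a'" using h1 h2 by (simp add: ADbar_def)
  have lnp: "0 < ln (real n)" using n by simp
  have Nt: "l2norm d (Delta_vec n a a' W t) \<le> M * (L t + L' t)" for t
  proof -
    have "l2norm d (Delta_vec n a a' W t) \<le> M * (\<Sum>j<n. \<bar>a t j - a' t j\<bar>)"
      using Wj by (rule Delta_vec_bound)
    also have "\<dots> \<le> M * (L t + L' t)"
      unfolding L_def L'_def sum.distrib[symmetric]
      using M0 by (intro mult_left_mono sum_mono) auto
    finally show ?thesis .
  qed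
  have "(\<Sum>t<n. l2norm d (Delta_vec n a a' W t)) / real n \<le> (\<Sum>t<n. M * (L t + L' t)) / real n"
    using Nt np by (intro divide_right_mono sum_mono) auto
  also have "\<dots> = M * ((\<Sum>t<n. L t) / real n + (\<Sum>t<n. L' t) / real n)"
    by (simp add: sum.distrib flip: sum_distrib_left add_divide_distrib)
  also have "\<dots> \<le> M * (sqrt (2 * ln (real n) * AD n a) + sqrt (2 * ln (real n) * AD n a'))"
    using h1 h2 M0 by (intro mult_left_mono add_mono) auto
  also have "\<dots> \<le> M * sqrt (2 * (2 * ln (real n) * AD n a + 2 * ln (real n) * AD n a'))"
    using h1 h2 M0 lnp by (intro mult_left_mono sqrt_add_le) auto
  also have "2 * (2 * ln (real n) * AD n a + 2 * ln (real n) * AD n a') = 8 * ln (real n) * ADbar n a a'"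
    by (simp add: ADbar_def algebra_simps)
  finally show "(\<Sum>t<n. l2norm d (Delta_vec n a a' W t)) / real n
          \<le> M * sqrt (8 * ln (real n)) * sqrt (ADbar n a a')"
    by (simp add: real_sqrt_mult mult.assoc)
qed

lemma cs_mask:
  fixes c A :: "nat \<Rightarrow> real"
  assumes "\<And>h. h < K \<Longrightarrow> c h \<in> {0,1}" "\<And>h. h < K \<Longrightarrow> 0 \<le> A h"
  shows "(\<Sum>h<K. c h * sqrt (A h)) \<le> sqrt (\<Sum>h<K. c h) * sqrt (\<Sum>h<K. c h * A h)"
proof -
  have "(\<Sum>h<K. c h * sqrt (A h))^2 = (\<Sum>h<K. c h * (c h * sqrt (A h)))^2"
    using assms(1) by (intro arg_cong[where f="\<lambda>z. z^2"] sum.cong) auto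
  also have "\<dots> \<le> (\<Sum>h<K. (c h)^2) * (\<Sum>h<K. (c h * sqrt (A h))^2)"
    by (rule Cauchy_Schwarz_ineq_sum)
  also have "\<dots> = (\<Sum>h<K. c h) * (\<Sum>h<K. c h * A h)"
  proof (intro arg_cong2[where f="(*)"] sum.cong refl)
    fix h assume "h \<in> {..<K}"
    then have "c h = 0 \<or> c h = 1" "0 \<le> A h" using assms by auto
    then show "(c h)^2 = c h" "(c h * sqrt (A h))^2 = c h * A h" by (auto simp: power_mult_distrib)
  qed
  finally have "(\<Sum>h<K. c h * sqrt (A h))^2 \<le> (\<Sum>h<K. c h) * (\<Sum>h<K. c h * A h)" .
  then show ?thesis by (simp add: real_le_rsqrt real_sqrt_mult[symmetric])
qed

lemma one_input:
  assumes st: "setting n K d m \<rho> M \<alpha> \<alpha>' V"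
  shows "Delta_norm n K d m \<alpha> \<alpha>' V
        \<le> M * sqrt (8 * ln (real n)) * (\<Sum>h<K. (1 - m h) * sqrt (ADbar n (\<alpha> h) (\<alpha>' h)))"
    and "M * sqrt (8 * ln (real n)) * (\<Sum>h<K. (1 - m h) * sqrt (ADbar n (\<alpha> h) (\<alpha>' h)))
        \<le> sqrt 8 * M * sqrt (real K * \<rho> * ln (real n))
            * sqrt (\<Sum>h<K. (1 - m h) * ADbar n (\<alpha> h) (\<alpha>' h))"
    and "0 \<le> sqrt 8 * M * sqrt (real K * \<rho> * ln (real n))"
    and "\<And>h. h < K \<Longrightarrow> 0 \<le> ADbar n (\<alpha> h) (\<alpha>' h)"
proof -
  have n: "2 \<le> n" and mm: "\<And>h. h < K \<Longrightarrow> m h \<in> {0,1}"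
    and rho: "(\<Sum>h<K. 1 - m h) = real K * \<rho>"
    and sp: "\<And>h t. h < K \<Longrightarrow> t < n \<Longrightarrow> in_simplex n (\<alpha> h t) \<and> in_simplex n (\<alpha>' h t)"
    and VM: "\<And>h. h < K \<Longrightarrow> inf2_norm n d (V h) \<le> M"
    using st by (auto simp: setting_def)
  have hb1: "(\<Sum>t<n. l2norm d (Delta_vec n (\<alpha> h) (\<alpha>' h) (V h) t)) / real n
          \<le> M * sqrt (8 * ln (real n)) * sqrt (ADbar n (\<alpha> h) (\<alpha>' h))" if "h < K" for h
    by (rule head_bound(1)[OF n]) (use sp VM that in auto)
  have hb2: "0 \<le> M" if "h < K" for h
    by (rule head_bound(2)[OF n, of "\<alpha> h" "\<alpha>' h" d "V h"]) (use sp VM that in auto)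
  show AD0: "\<And>h. h < K \<Longrightarrow> 0 \<le> ADbar n (\<alpha> h) (\<alpha>' h)"
    by (rule head_bound(3)[OF n, of _ _ d "V _" M]) (use sp VM in auto)
  have cm: "\<And>h. h < K \<Longrightarrow> 0 \<le> 1 - m h" using mm by force
  have "Delta_norm n K d m \<alpha> \<alpha>' V
      = (\<Sum>h<K. (1 - m h) * ((\<Sum>t<n. l2norm d (Delta_vec n (\<alpha> h) (\<alpha>' h) (V h) t)) / real n))"
    unfolding Delta_norm_def
    by (simp add: sum.swap[of _ "{..<n}"] sum_distrib_left sum_divide_distrib mult.assoc mult.left_commute)
  also have "\<dots> \<le> (\<Sum>h<K. (1 - m h) * (M * sqrt (8 * ln (real n)) * sqrt (ADbar n (\<alpha> h) (\<alpha>' h))))"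
    using hb1 cm by (intro sum_mono mult_left_mono) auto
  also have "\<dots> = M * sqrt (8 * ln (real n)) * (\<Sum>h<K. (1 - m h) * sqrt (ADbar n (\<alpha> h) (\<alpha>' h)))"
    by (simp add: sum_distrib_left mult.assoc mult.left_commute)
  finally show "Delta_norm n K d m \<alpha> \<alpha>' V
        \<le> M * sqrt (8 * ln (real n)) * (\<Sum>h<K. (1 - m h) * sqrt (ADbar n (\<alpha> h) (\<alpha>' h)))" .
  have C0: "0 \<le> M \<or> K = 0" using hb2 by auto
  then show "0 \<le> sqrt 8 * M * sqrt (real K * \<rho> * ln (real n))"
  proof
    assume "0 \<le> M"
    have "0 \<le> (\<Sum>h<K. 1 - m h)" using cm by (intro sum_nonneg) auto
    then have "0 \<le> real K * \<rho> * ln (real n)" using rho n by simp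
    then show ?thesis using \<open>0 \<le> M\<close> by (intro mult_nonneg_nonneg) auto
  qed simp
  have cs: "(\<Sum>h<K. (1 - m h) * sqrt (ADbar n (\<alpha> h) (\<alpha>' h)))
      \<le> sqrt (\<Sum>h<K. 1 - m h) * sqrt (\<Sum>h<K. (1 - m h) * ADbar n (\<alpha> h) (\<alpha>' h))"
    by (rule cs_mask) (use mm AD0 in force)+
  show "M * sqrt (8 * ln (real n)) * (\<Sum>h<K. (1 - m h) * sqrt (ADbar n (\<alpha> h) (\<alpha>' h)))
        \<le> sqrt 8 * M * sqrt (real K * \<rho> * ln (real n))
            * sqrt (\<Sum>h<K. (1 - m h) * ADbar n (\<alpha> h) (\<alpha>' h))"
    using C0
  proof
    assume M0: "0 \<le> M"
    have "M * sqrt (8 * ln (real n)) * (\<Sum>h<K. (1 - m h) * sqrt (ADbar n (\<alpha> h) (\<alpha>' h)))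
        \<le> M * sqrt (8 * ln (real n)) * (sqrt (real K * \<rho>) * sqrt (\<Sum>h<K. (1 - m h) * ADbar n (\<alpha> h) (\<alpha>' h)))"
      using cs M0 rho n by (intro mult_left_mono mult_nonneg_nonneg) auto
    also have "\<dots> = sqrt 8 * M * sqrt (real K * \<rho> * ln (real n))
            * sqrt (\<Sum>h<K. (1 - m h) * ADbar n (\<alpha> h) (\<alpha>' h))"
      by (simp add: real_sqrt_mult)
    finally show ?thesis .
  qed simp
qed

lemma sqrt_le_tangent: "0 \<le> s \<Longrightarrow> 0 < c \<Longrightarrow> sqrt s \<le> (s + c^2) / (2*c)"
proof -
  assume s: "0 \<le> s" and c: "0 < c"
  have "0 \<le> (sqrt s - c)^2" by simp
  then have "2 * c * sqrt s \<le> s + c^2" using s by (simp add: power2_eq_square algebra_simps)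
  then show ?thesis using c by (simp add: field_simps)
qed

lemma expectation_part:
  fixes \<mu> :: "'x measure"
  assumes ps: "prob_space \<mu>"
    and st: "\<forall>x\<in>space \<mu>. setting n K d m \<rho> M (A x) (A' x) (W x)"
    and iD: "integrable \<mu> (\<lambda>x. Delta_norm n K d m (A x) (A' x) (W x))"
    and iA: "\<forall>h<K. integrable \<mu> (\<lambda>x. ADbar n (A x h) (A' x h))"
  shows "(LINT x|\<mu>. Delta_norm n K d m (A x) (A' x) (W x))
        \<le> sqrt 8 * M * sqrt (real K * \<rho> * ln (real n))
            * sqrt (\<Sum>h<K. (1 - m h) * (LINT x|\<mu>. ADbar n (A x h) (A' x h)))"
proof -
  define C where "C = sqrt 8 * M * sqrt (real K * \<rho> * ln (real n))"
  define S where "S x = (\<Sum>h<K. (1 - m h) * ADbar n (A x h) (A' x h))" for x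
  define Dn where "Dn x = Delta_norm n K d m (A x) (A' x) (W x)" for x
  interpret prob_space \<mu> by (rule ps)
  obtain x0 where x0: "x0 \<in> space \<mu>" using not_empty by blast
  have C0: "0 \<le> C" using one_input(3) st x0 unfolding C_def by blast
  have pw: "Dn x \<le> C * sqrt (S x)" if "x \<in> space \<mu>" for x
  proof -
    have s: "setting n K d m \<rho> M (A x) (A' x) (W x)" using st that by blast
    show ?thesis unfolding C_def S_def Dn_def
      by (rule order_trans[OF one_input(1)[OF s] one_input(2)[OF s]])
  qed
  have S0: "0 \<le> S x" if "x \<in> space \<mu>" for x
  proof -
    have s: "setting n K d m \<rho> M (A x) (A' x) (W x)" using st that by blast
    have m01: "\<And>h. h < K \<Longrightarrow> m h \<in> {0,1}" using s unfolding setting_def by blast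
    have "\<And>h. h < K \<Longrightarrow> 0 \<le> 1 - m h" using m01 by force
    moreover have "\<And>h. h < K \<Longrightarrow> 0 \<le> ADbar n (A x h) (A' x h)" using one_input(4)[OF s] by blast
    ultimately show ?thesis unfolding S_def by (intro sum_nonneg mult_nonneg_nonneg) auto
  qed
  have iS: "integrable \<mu> S" unfolding S_def
    by (rule Bochner_Integration.integrable_sum, rule integrable_mult_right) (use iA in auto)
  have ES: "(LINT x|\<mu>. S x) = (\<Sum>h<K. (1 - m h) * (LINT x|\<mu>. ADbar n (A x h) (A' x h)))"
    unfolding S_def by (subst Bochner_Integration.integral_sum) (use iA in \<open>auto intro: integrable_mult_right\<close>)
  have ES0: "0 \<le> (LINT x|\<mu>. S x)" by (rule Bochner_Integration.integral_nonneg) (rule S0)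
  have key: "(LINT x|\<mu>. Dn x) \<le> C / (2*c) * (LINT x|\<mu>. S x) + C * c / 2" if c: "0 < c" for c
  proof -
    have "(LINT x|\<mu>. Dn x) \<le> (LINT x|\<mu>. C / (2*c) * S x + C * c / 2)"
    proof (rule Bochner_Integration.integral_mono)
      show "integrable \<mu> Dn" using iD unfolding Dn_def by simp
      show "integrable \<mu> (\<lambda>x. C / (2*c) * S x + C * c / 2)"
        by (intro Bochner_Integration.integrable_add integrable_mult_right iS integrable_const)
      fix x assume x: "x \<in> space \<mu>"
      have "Dn x \<le> C * sqrt (S x)" using pw[OF x] .
      also have "\<dots> \<le> C * ((S x + c^2) / (2*c))"
        using C0 sqrt_le_tangent[OF S0[OF x] c] by (intro mult_left_mono) auto
      also have "\<dots> = C / (2*c) * S x + C * c / 2" using c by (simp add: field_simps power2_eq_square)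
      finally show "Dn x \<le> C / (2*c) * S x + C * c / 2" .
    qed
    also have "\<dots> = (LINT x|\<mu>. C / (2*c) * S x) + (LINT x|\<mu>. C * c / 2)"
      by (rule Bochner_Integration.integral_add[OF integrable_mult_right[OF iS] integrable_const])
    also have "\<dots> = C / (2*c) * (LINT x|\<mu>. S x) + C * c / 2"
      by (simp add: prob_space)
    finally show ?thesis .
  qed
  have "(LINT x|\<mu>. Dn x) \<le> C * sqrt (LINT x|\<mu>. S x)"
  proof (cases "0 < (LINT x|\<mu>. S x)")
    case True
    define c where "c = sqrt (LINT x|\<mu>. S x)"
    have cp: "0 < c" using True by (simp add: c_def)
    have "(LINT x|\<mu>. Dn x) \<le> C / (2*c) * (LINT x|\<mu>. S x) + C * c / 2" using key[OF cp] .
    also have "(LINT x|\<mu>. S x) = c^2" using True by (simp add: c_def)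
    also have "C / (2*c) * c^2 + C * c / 2 = C * c" using cp by (simp add: field_simps power2_eq_square)
    finally show ?thesis by (simp add: c_def)
  next
    case False
    then have E0: "(LINT x|\<mu>. S x) = 0" using ES0 by simp
    show ?thesis
    proof (rule ccontr)
      assume "\<not> ?thesis"
      then have pos: "0 < (LINT x|\<mu>. Dn x)" using E0 by simp
      show False
      proof (cases "C = 0")
        case True
        then show False using key[of 1] pos by simp
      next
        case False
        then have Cp: "0 < C" using C0 by simp
        have "(LINT x|\<mu>. Dn x) \<le> C * ((LINT x|\<mu>. Dn x) / C) / 2"
          using key[of "(LINT x|\<mu>. Dn x) / C"] pos Cp E0 by simp
        then show False using pos Cp by simp
      qed
    qed
  qed
  then show ?thesis unfolding C_def Dn_def ES by simp
qed

theorem mainTheorem6: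
  fixes n K d :: nat and m :: "nat \<Rightarrow> real" and \<rho> M :: real
  shows
  "(\<forall>\<alpha> \<alpha>' V. setting n K d m \<rho> M \<alpha> \<alpha>' V \<longrightarrow>
      Delta_norm n K d m \<alpha> \<alpha>' V
        \<le> M * sqrt (8 * ln (real n)) * (\<Sum>h<K. (1 - m h) * sqrt (ADbar n (\<alpha> h) (\<alpha>' h)))
    \<and> M * sqrt (8 * ln (real n)) * (\<Sum>h<K. (1 - m h) * sqrt (ADbar n (\<alpha> h) (\<alpha>' h)))
        \<le> sqrt 8 * M * sqrt (real K * \<rho> * ln (real n))
            * sqrt (\<Sum>h<K. (1 - m h) * ADbar n (\<alpha> h) (\<alpha>' h)))
   \<and>
   (\<forall>(\<mu> :: 'x measure) A A' W.
      prob_space \<mu> \<longrightarrow>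
      (\<forall>x\<in>space \<mu>. setting n K d m \<rho> M (A x) (A' x) (W x)) \<longrightarrow>
      integrable \<mu> (\<lambda>x. Delta_norm n K d m (A x) (A' x) (W x)) \<longrightarrow>
      (\<forall>h<K. integrable \<mu> (\<lambda>x. ADbar n (A x h) (A' x h))) \<longrightarrow>
      (LINT x|\<mu>. Delta_norm n K d m (A x) (A' x) (W x))
        \<le> sqrt 8 * M * sqrt (real K * \<rho> * ln (real n))
            * sqrt (\<Sum>h<K. (1 - m h) * (LINT x|\<mu>. ADbar n (A x h) (A' x h))))"
proof (intro conjI allI impI)
  fix \<alpha> \<alpha>' V assume s: "setting n K d m \<rho> M \<alpha> \<alpha>' V"
  show "Delta_norm n K d m \<alpha> \<alpha>' V
        \<le> M * sqrt (8 * ln (real n)) * (\<Sum>h<K. (1 - m h) * sqrt (ADbar n (\<alpha> h) (\<alpha>' h)))"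
    by (rule one_input(1)[OF s])
  show "M * sqrt (8 * ln (real n)) * (\<Sum>h<K. (1 - m h) * sqrt (ADbar n (\<alpha> h) (\<alpha>' h)))
        \<le> sqrt 8 * M * sqrt (real K * \<rho> * ln (real n))
            * sqrt (\<Sum>h<K. (1 - m h) * ADbar n (\<alpha> h) (\<alpha>' h))"
    by (rule one_input(2)[OF s])
next
  fix \<mu> :: "'x measure" and A A' W
  assume "prob_space \<mu>" "\<forall>x\<in>space \<mu>. setting n K d m \<rho> M (A x) (A' x) (W x)"
    "integrable \<mu> (\<lambda>x. Delta_norm n K d m (A x) (A' x) (W x))"
    "\<forall>h<K. integrable \<mu> (\<lambda>x. ADbar n (A x h) (A' x h))"
  then show "(LINT x|\<mu>. Delta_norm n K d m (A x) (A' x) (W x))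
        \<le> sqrt 8 * M * sqrt (real K * \<rho> * ln (real n))
            * sqrt (\<Sum>h<K. (1 - m h) * (LINT x|\<mu>. ADbar n (A x h) (A' x h)))"
    by (rule expectation_part)
qed

end
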